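(* Let $\{t_n\}_{n\in\mathbb Z}\subset\mathbb R$ be increasing with $t_n\to\pm\infty$ as $n\to\pm\infty$, and let $\mu_n>0$ with $\sum_n\mu_n<\infty$. Let $A$ be an entire function, real on $\mathbb R$, with only simple real zeros, located exactly at the points $t_n$. Define the entire function $B$ by $$\frac{B(z)}{A(z)}=\sum_n\frac{\mu_n}{z-t_n},$$ and let $s_n$ denote the zero of $B$ in $(t_n,t_{n+1})$. Then $$\sum_{s_n>0}\frac{t_{n+1}-s_n}{s_n}<\infty,\qquad \sum_{s_n<0}\frac{s_n-t_n}{|s_n|}<\infty.$$ *)

theory Defs
  imports "HOL-Analysis.Analysis"
begin

end

theory Submission
  imports Defs "HOL-Computational_Algebra.Polynomial"
begin

lemma key_identity:
  fixes t \<mu> r :: "int \<Rightarrow> real" and a b :: int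
  assumes tm: "strict_mono t" and ab: "a \<le> b"
    and r_in: "\<And>n. n \<in> {a..<b} \<Longrightarrow> t n < r n \<and> r n < t (n+1)"
    and r_zero: "\<And>n. n \<in> {a..<b} \<Longrightarrow> (\<Sum>k\<in>{a..b}. \<mu> k / (r n - t k)) = 0"
  shows "(\<Sum>k\<in>{a..b}. complex_of_real (\<mu> k) / (\<i> - of_real (t k))) * (\<Prod>k\<in>{a..b}. (\<i> - of_real (t k)))
       = of_real (\<Sum>k\<in>{a..b}. \<mu> k) * (\<Prod>n\<in>{a..<b}. (\<i> - of_real (r n)))"
proof -
  define I where "I = {a..b}"
  define m where "m = nat (b - a)"
  define M where "M = (\<Sum>k\<in>I. \<mu> k)"
  define P :: "complex poly" where "P = (\<Sum>k\<in>I. smult (of_real (\<mu> k)) (\<Prod>j\<in>I-{k}. [:- of_real (t j), 1:]))"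
  define R :: "complex poly" where "R = smult (of_real M) (\<Prod>n\<in>{a..<b}. [:- of_real (r n), 1:])"
  have finI: "finite I" by (simp add: I_def)
  have cardk: "card (I - {k}) = m" if "k \<in> I" for k
    using that ab by (simp add: I_def m_def card_Diff_singleton)
  have degprod: "degree (\<Prod>j\<in>J. [:- of_real (t j), 1:] :: complex poly) = card J"
     and lcprod: "coeff (\<Prod>j\<in>J. [:- of_real (t j), 1:] :: complex poly) (card J) = 1" if "finite J" for J
  proof -
    show d: "degree (\<Prod>j\<in>J. [:- of_real (t j), 1:] :: complex poly) = card J"
      by (subst degree_prod_sum_eq) auto
    have "lead_coeff (\<Prod>j\<in>J. [:- of_real (t j), 1:] :: complex poly) = 1"
      by (simp add: lead_coeff_prod)
    then show "coeff (\<Prod>j\<in>J. [:- of_real (t j), 1:] :: complex poly) (card J) = 1" using d by simp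
  qed
  have polyP: "poly P z = (\<Sum>k\<in>I. of_real (\<mu> k) * (\<Prod>j\<in>I-{k}. z - of_real (t j)))" for z
    by (simp add: P_def poly_sum poly_prod)
  have key2: "poly P z = (\<Prod>j\<in>I. z - of_real (t j)) * (\<Sum>k\<in>I. of_real (\<mu> k) / (z - of_real (t k)))"
    if nz: "\<And>j. j \<in> I \<Longrightarrow> z \<noteq> of_real (t j)" for z
  proof -
    have "(\<Prod>j\<in>I. z - of_real (t j)) * (of_real (\<mu> k) / (z - of_real (t k)))
          = of_real (\<mu> k) * (\<Prod>j\<in>I-{k}. z - of_real (t j))" if k: "k \<in> I" for k
    proof -
      have "(\<Prod>j\<in>I. z - of_real (t j)) = (z - of_real (t k)) * (\<Prod>j\<in>I-{k}. z - of_real (t j))"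
        using k finI by (simp add: prod.remove)
      moreover have "z - of_real (t k) \<noteq> 0" using nz[OF k] by simp
      ultimately show ?thesis
        by (metis mult.commute nonzero_mult_div_cancel_left times_divide_eq_right)
    qed
    then show ?thesis by (simp add: polyP sum_distrib_left)
  qed
  have degP: "degree P \<le> m"
    unfolding P_def
    by (rule degree_sum_le[OF finI]) (metis cardk degprod degree_smult_le finI finite_Diff)
  have coeffP: "coeff P m = of_real M"
  proof -
    have "coeff P m = (\<Sum>k\<in>I. of_real (\<mu> k))"
      unfolding P_def coeff_sum coeff_smult
    proof (rule sum.cong)
      fix k assume k: "k \<in> I"
      have "coeff (\<Prod>j\<in>I-{k}. [:- of_real (t j), 1:] :: complex poly) m = 1"
        using lcprod[of "I - {k}"] cardk[OF k] finI by simp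
      then show "of_real (\<mu> k) * coeff (\<Prod>j\<in>I-{k}. [:- of_real (t j), 1:] :: complex poly) m = of_real (\<mu> k)" by simp
    qed simp
    then show ?thesis by (simp add: M_def)
  qed
  have degQ: "degree (\<Prod>n\<in>{a..<b}. [:- of_real (r n), 1:] :: complex poly) = m"
    by (subst degree_prod_sum_eq) (auto simp: m_def)
  have lcQ: "coeff (\<Prod>n\<in>{a..<b}. [:- of_real (r n), 1:] :: complex poly) m = 1"
    using lead_coeff_prod[of "\<lambda>n. [:- of_real (r n), 1:] :: complex poly" "{a..<b}"] degQ by simp
  have degR: "degree R \<le> m"
    unfolding R_def using degQ degree_smult_le by (metis)
  have coeffR: "coeff R m = of_real M" unfolding R_def using lcQ by simp
  have rne: "r n \<noteq> t j" if n: "n \<in> {a..<b}" for n j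
  proof (cases "j \<le> n")
    case True
    then have "t j \<le> t n" using tm by (simp add: strict_mono_less_eq)
    then show ?thesis using r_in[OF n] by simp
  next
    case False
    then have "t (n+1) \<le> t j" using tm by (simp add: strict_mono_less_eq)
    then show ?thesis using r_in[OF n] by simp
  qed
  have rootP: "poly P (of_real (r n)) = 0" if n: "n \<in> {a..<b}" for n
  proof -
    have "poly P (of_real (r n)) = (\<Prod>j\<in>I. of_real (r n) - of_real (t j)) * (\<Sum>k\<in>I. of_real (\<mu> k) / (of_real (r n) - of_real (t k)))"
      by (rule key2) (use rne[OF n] in auto)
    also have "(\<Sum>k\<in>I. of_real (\<mu> k) / (of_real (r n) - of_real (t k)) :: complex) = of_real (\<Sum>k\<in>I. \<mu> k / (r n - t k))"
      by simp
    also have "\<dots> = 0" using r_zero[OF n] by (simp add: I_def)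
    finally show ?thesis by simp
  qed
  have rootR: "poly R (of_real (r n)) = 0" if n: "n \<in> {a..<b}" for n
    unfolding R_def poly_smult poly_prod using n by (auto intro!: prod_zero)
  have rmono: "r n < r n'" if "n \<in> {a..<b}" "n' \<in> {a..<b}" "n < n'" for n n'
  proof -
    have "t (n+1) \<le> t n'" using tm that by (simp add: strict_mono_less_eq)
    moreover have "r n < t (n+1)" "t n' < r n'" using r_in that(1,2) by auto
    ultimately show ?thesis by linarith
  qed
  have inj: "inj_on (\<lambda>n. complex_of_real (r n)) {a..<b}"
  proof (rule inj_onI)
    fix x y assume "x \<in> {a..<b}" "y \<in> {a..<b}" "complex_of_real (r x) = complex_of_real (r y)"
    then show "x = y" using rmono[of x y] rmono[of y x] by (metis of_real_eq_iff linorder_neqE less_irrefl)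
  qed
  have "P = R"
  proof (rule poly_eqI_degree_lead_coeff[where A = "(\<lambda>n. complex_of_real (r n)) ` {a..<b}" and n = m])
    show "coeff P m = coeff R m" using coeffP coeffR by simp
    show "m \<le> card ((\<lambda>n. complex_of_real (r n)) ` {a..<b})" using card_image[OF inj] by (simp add: m_def)
  qed (use degP degR rootP rootR in auto)
  then have "poly P \<i> = poly R \<i>" by simp
  moreover have "poly P \<i> = (\<Prod>j\<in>I. \<i> - of_real (t j)) * (\<Sum>k\<in>I. of_real (\<mu> k) / (\<i> - of_real (t k)))"
    by (rule key2) (auto simp: complex_eq_iff)
  moreover have "poly R \<i> = of_real M * (\<Prod>n\<in>{a..<b}. (\<i> - of_real (r n)))"
    by (simp add: R_def poly_prod)
  ultimately show ?thesis by (simp add: I_def M_def mult.commute)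
qed

definition w :: "real \<Rightarrow> real" where "w x = sqrt (1 + x\<^sup>2)"

lemma w_cmod: "cmod (\<i> - complex_of_real x) = w x"
  by (simp add: cmod_def w_def add.commute)

lemma w_ge1: "w x \<ge> 1" by (simp add: w_def)

lemma w_mono: "\<bar>x\<bar> \<le> \<bar>y\<bar> \<Longrightarrow> w x \<le> w y"
  unfolding w_def by (simp add: abs_le_square_iff)

lemma Im_term: "Im (complex_of_real m / (\<i> - complex_of_real x)) = - m / (1 + x\<^sup>2)"
  by (simp add: Im_divide power2_eq_square)

lemma key_bound:
  fixes t \<mu> r :: "int \<Rightarrow> real" and a b :: int
  assumes tm: "strict_mono t" and \<mu>_pos: "\<And>n. \<mu> n > 0" and a0: "a \<le> 0" and b0: "0 \<le> b"
    and r_in: "\<And>n. n \<in> {a..<b} \<Longrightarrow> t n < r n \<and> r n < t (n+1)"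
    and r_zero: "\<And>n. n \<in> {a..<b} \<Longrightarrow> (\<Sum>k\<in>{a..b}. \<mu> k / (r n - t k)) = 0"
  shows "(\<Prod>n\<in>{a..<b}. w (t (if r n \<ge> 0 then n+1 else n)) / w (r n))
           \<le> (\<Sum>k\<in>{a..b}. \<mu> k) / (\<mu> 0 / (1 + (t 0)\<^sup>2))"
proof -
  define p where "p n = (if r n \<ge> 0 then n+1 else n)" for n
  define F where "F = (\<Sum>k\<in>{a..b}. complex_of_real (\<mu> k) / (\<i> - of_real (t k)))"
  define M where "M = (\<Sum>k\<in>{a..b}. \<mu> k)"
  define c where "c = \<mu> 0 / (1 + (t 0)\<^sup>2)"
  have c_pos: "c > 0" using \<mu>_pos[of 0] by (simp add: c_def add_pos_nonneg)
  have M_nonneg: "M \<ge> 0" unfolding M_def by (rule sum_nonneg) (use \<mu>_pos less_imp_le in blast)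
  have id: "F * (\<Prod>k\<in>{a..b}. (\<i> - of_real (t k))) = of_real M * (\<Prod>n\<in>{a..<b}. (\<i> - of_real (r n)))"
    unfolding F_def M_def by (rule key_identity[OF tm _ r_in r_zero]) (use a0 b0 in auto)
  have idn: "cmod F * (\<Prod>k\<in>{a..b}. w (t k)) = M * (\<Prod>n\<in>{a..<b}. w (r n))"
  proof -
    have "cmod (F * (\<Prod>k\<in>{a..b}. (\<i> - of_real (t k)))) = cmod (of_real M * (\<Prod>n\<in>{a..<b}. (\<i> - of_real (r n))))"
      using id by simp
    then show ?thesis
      by (simp add: norm_mult prod_norm[symmetric] w_cmod M_nonneg)
  qed
  have ImF: "Im F = - (\<Sum>k\<in>{a..b}. \<mu> k / (1 + (t k)\<^sup>2))"
    unfolding F_def Im_sum Im_term by (simp add: sum_negf)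
  have "c \<le> (\<Sum>k\<in>{a..b}. \<mu> k / (1 + (t k)\<^sup>2))"
    unfolding c_def
    by (rule member_le_sum[of 0 "{a..b}" "\<lambda>k. \<mu> k / (1 + (t k)\<^sup>2)"])
       (use a0 b0 divide_nonneg_pos[OF less_imp_le[OF \<mu>_pos] add_pos_nonneg[OF zero_less_one zero_le_power2]] in auto)
  also have "\<dots> = \<bar>Im F\<bar>"
  proof -
    have "0 \<le> (\<Sum>k\<in>{a..b}. \<mu> k / (1 + (t k)\<^sup>2))"
      by (rule sum_nonneg) (use divide_nonneg_pos[OF less_imp_le[OF \<mu>_pos] add_pos_nonneg[OF zero_less_one zero_le_power2]] in auto)
    then show ?thesis using ImF by simp
  qed
  also have "\<dots> \<le> cmod F" by (rule abs_Im_le_cmod)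
  finally have cF: "c \<le> cmod F" .
  have Wr_pos: "(\<Prod>n\<in>{a..<b}. w (r n)) > 0" by (rule prod_pos) (use w_ge1 in \<open>auto intro: less_le_trans[OF zero_less_one]\<close>)
  have Wt_pos: "(\<Prod>k\<in>{a..b}. w (t k)) > 0" by (rule prod_pos) (use w_ge1 in \<open>auto intro: less_le_trans[OF zero_less_one]\<close>)
  have injp: "inj_on p {a..<b}"
  proof (rule inj_onI)
    fix x y assume x: "x \<in> {a..<b}" and y: "y \<in> {a..<b}" and e: "p x = p y"
    have rm: "r n < r n'" if "n \<in> {a..<b}" "n' \<in> {a..<b}" "n < n'" for n n'
    proof -
      have "t (n+1) \<le> t n'" using tm that by (simp add: strict_mono_less_eq)
      moreover have "r n < t (n+1)" "t n' < r n'" using r_in that(1,2) by auto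
      ultimately show ?thesis by linarith
    qed
    show "x = y"
    proof (rule ccontr)
      assume "x \<noteq> y"
      then consider "x < y" | "y < x" by linarith
      then show False
      proof cases
        case 1 with rm[OF x y] e show False by (auto simp: p_def split: if_splits)
      next
        case 2 with rm[OF y x] e show False by (auto simp: p_def split: if_splits)
      qed
    qed
  qed
  have pimg: "p ` {a..<b} \<subseteq> {a..b}" by (auto simp: p_def)
  have "(\<Prod>n\<in>{a..<b}. w (t (p n))) = (\<Prod>k\<in>p ` {a..<b}. w (t k))"
    by (simp add: prod.reindex[OF injp])
  also have "\<dots> \<le> (\<Prod>k\<in>{a..b}. w (t k))"
    by (rule prod_mono2[OF _ pimg]) (use w_ge1 in \<open>auto intro: order_trans[OF zero_le_one]\<close>)
  finally have Wtp: "(\<Prod>n\<in>{a..<b}. w (t (p n))) \<le> (\<Prod>k\<in>{a..b}. w (t k))" .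
  have "(\<Prod>n\<in>{a..<b}. w (t (p n)) / w (r n)) = (\<Prod>n\<in>{a..<b}. w (t (p n))) / (\<Prod>n\<in>{a..<b}. w (r n))"
    by (rule prod_dividef)
  also have "\<dots> \<le> (\<Prod>k\<in>{a..b}. w (t k)) / (\<Prod>n\<in>{a..<b}. w (r n))"
    by (rule divide_right_mono[OF Wtp]) (use Wr_pos in simp)
  also have "\<dots> \<le> M / c"
  proof -
    have "c * (\<Prod>k\<in>{a..b}. w (t k)) \<le> cmod F * (\<Prod>k\<in>{a..b}. w (t k))"
      using cF Wt_pos by simp
    also have "\<dots> = M * (\<Prod>n\<in>{a..<b}. w (r n))" by (rule idn)
    finally show ?thesis using c_pos Wr_pos by (simp add: field_simps)
  qed
  finally show ?thesis by (simp add: p_def M_def c_def)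
qed


lemma G_split:
  fixes t \<mu> :: "int \<Rightarrow> real"
  assumes "finite I" "n \<in> I" "x \<noteq> t n"
  shows "(\<Sum>k\<in>I. \<mu> k / (x - t k)) = (\<mu> n + (x - t n) * (\<Sum>k\<in>I-{n}. \<mu> k / (x - t k))) / (x - t n)"
  using assms by (simp add: sum.remove field_simps)

lemma pos_near:
  fixes t \<mu> :: "int \<Rightarrow> real"
  assumes tm: "strict_mono t" and fin: "finite I" and \<mu>n: "\<mu> n \<noteq> 0"
  shows "\<exists>d>0. \<forall>y. y \<noteq> t n \<and> \<bar>y - t n\<bar> < d \<longrightarrow> sgn (\<mu> n + (y - t n) * (\<Sum>k\<in>I-{n}. \<mu> k / (y - t k))) = sgn (\<mu> n)"
proof -
  define H where "H y = \<mu> n + (y - t n) * (\<Sum>k\<in>I-{n}. \<mu> k / (y - t k))" for y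
  have ne: "t n - t k \<noteq> 0" if "k \<in> I - {n}" for k
    using that tm strict_mono_eq by fastforce
  have "isCont H (t n)" unfolding H_def
    by (intro continuous_intros) (use ne in auto)
  then have lim: "(H \<longlongrightarrow> \<mu> n) (at (t n))" by (simp add: isCont_def H_def)
  have "\<forall>\<^sub>F y in at (t n). sgn (H y) = sgn (\<mu> n)"
  proof (cases "\<mu> n > 0")
    case True
    then have "\<forall>\<^sub>F y in at (t n). H y > 0" using order_tendstoD(1)[OF lim, of 0] by simp
    then show ?thesis by eventually_elim (use True in simp)
  next
    case False
    then have "\<mu> n < 0" using \<mu>n by simp
    then have "\<forall>\<^sub>F y in at (t n). H y < 0" using order_tendstoD(2)[OF lim, of 0] by simp
    then show ?thesis by eventually_elim (use \<open>\<mu> n < 0\<close> in simp)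
  qed
  then show ?thesis unfolding eventually_at H_def dist_real_def by auto
qed

lemma zero_exists:
  fixes t \<mu> :: "int \<Rightarrow> real"
  assumes tm: "strict_mono t" and \<mu>_pos: "\<And>k. \<mu> k > 0" and fin: "finite I"
    and nI: "n \<in> I" and n1I: "n + 1 \<in> I"
  shows "\<exists>r. t n < r \<and> r < t (n+1) \<and> (\<Sum>k\<in>I. \<mu> k / (r - t k)) = 0"
proof -
  define G where "G x = (\<Sum>k\<in>I. \<mu> k / (x - t k))" for x
  define h where "h = t (n+1) - t n"
  have h: "h > 0" using tm by (simp add: h_def strict_mono_less)
  obtain d1 where d1: "d1 > 0" and D1: "\<And>y. y \<noteq> t n \<Longrightarrow> \<bar>y - t n\<bar> < d1 \<Longrightarrow>
       sgn (\<mu> n + (y - t n) * (\<Sum>k\<in>I-{n}. \<mu> k / (y - t k))) = sgn (\<mu> n)"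
    using pos_near[OF tm fin, of \<mu> n] \<mu>_pos[of n] by auto
  obtain d2 where d2: "d2 > 0" and D2: "\<And>y. y \<noteq> t (n+1) \<Longrightarrow> \<bar>y - t (n+1)\<bar> < d2 \<Longrightarrow>
       sgn (\<mu> (n+1) + (y - t (n+1)) * (\<Sum>k\<in>I-{n+1}. \<mu> k / (y - t k))) = sgn (\<mu> (n+1))"
    using pos_near[OF tm fin, of \<mu> "n+1"] \<mu>_pos[of "n+1"] by auto
  define x0 where "x0 = t n + min d1 h / 3"
  define y0 where "y0 = t (n+1) - min d2 h / 3"
  have x0: "t n < x0" "x0 < y0" "y0 < t (n+1)"
  proof -
    have "min d1 h \<le> h" "min d2 h \<le> h" "min d1 h > 0" "min d2 h > 0" using d1 d2 h by auto
    then show "t n < x0" "x0 < y0" "y0 < t (n+1)" unfolding x0_def y0_def h_def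
      by (simp_all add: field_simps)
  qed
  have Gx0: "G x0 > 0"
  proof -
    have "sgn (\<mu> n + (x0 - t n) * (\<Sum>k\<in>I-{n}. \<mu> k / (x0 - t k))) = sgn (\<mu> n)"
      by (rule D1) (use d1 h in \<open>auto simp: x0_def min_def\<close>)
    then have "\<mu> n + (x0 - t n) * (\<Sum>k\<in>I-{n}. \<mu> k / (x0 - t k)) > 0"
      using \<mu>_pos[of n] by (simp add: sgn_if split: if_splits)
    then show ?thesis unfolding G_def using G_split[OF fin nI, where x=x0 and t=t and \<mu>=\<mu>] x0 by simp
  qed
  have Gy0: "G y0 < 0"
  proof -
    have "sgn (\<mu> (n+1) + (y0 - t (n+1)) * (\<Sum>k\<in>I-{n+1}. \<mu> k / (y0 - t k))) = sgn (\<mu> (n+1))"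
      by (rule D2) (use d2 h in \<open>auto simp: y0_def min_def\<close>)
    then have "\<mu> (n+1) + (y0 - t (n+1)) * (\<Sum>k\<in>I-{n+1}. \<mu> k / (y0 - t k)) > 0"
      using \<mu>_pos[of "n+1"] by (simp add: sgn_if split: if_splits)
    moreover have "y0 - t (n+1) < 0" using x0 by simp
    ultimately show ?thesis unfolding G_def using G_split[OF fin n1I, where x=y0 and t=t and \<mu>=\<mu>] x0
      by (simp add: divide_pos_neg)
  qed
  have nz: "x - t k \<noteq> 0" if "x \<in> {x0..y0}" for x k
  proof (cases "k \<le> n")
    case True
    then have "t k \<le> t n" using tm by (simp add: strict_mono_less_eq)
    then show ?thesis using that x0 by auto
  next
    case False
    then have "t (n+1) \<le> t k" using tm by (simp add: strict_mono_less_eq)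
    then show ?thesis using that x0 by auto
  qed
  have "continuous_on {x0..y0} G" unfolding G_def
    by (intro continuous_intros) (use nz in auto)
  then obtain r where "x0 \<le> r" "r \<le> y0" "G r = 0"
    using IVT2'[of G y0 0 x0] Gx0 Gy0 x0 by auto
  then show ?thesis using x0 unfolding G_def by (intro exI[of _ r]) auto
qed

lemma term_dec:
  fixes t :: "int \<Rightarrow> real"
  assumes tm: "strict_mono t" and m: "m > 0" and x: "t n < x" "x < y" "y < t (n+1)"
  shows "m / (y - t k) < m / (x - t k)"
proof -
  have "(x - t k) * (y - t k) > 0"
  proof (cases "k \<le> n")
    case True
    then have "t k \<le> t n" using tm by (simp add: strict_mono_less_eq)
    then show ?thesis using x by (intro mult_pos_pos) auto
  next
    case False
    then have "t (n+1) \<le> t k" using tm by (simp add: strict_mono_less_eq)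
    then show ?thesis using x by (intro mult_neg_neg) auto
  qed
  then show ?thesis using m x by (intro divide_strict_left_mono) (auto simp: mult.commute)
qed

lemma dist_bound:
  fixes t :: "int \<Rightarrow> real"
  assumes tm: "strict_mono t" and x: "t n < x" "x < t (n+1)"
  shows "\<bar>x - t k\<bar> \<ge> min (x - t n) (t (n+1) - x)"
proof (cases "k \<le> n")
  case True
  then have "t k \<le> t n" using tm by (simp add: strict_mono_less_eq)
  then show ?thesis using x by auto
next
  case False
  then have "t (n+1) \<le> t k" using tm by (simp add: strict_mono_less_eq)
  then show ?thesis using x by auto
qed

lemma term_summable:
  fixes t \<mu> :: "int \<Rightarrow> real"
  assumes tm: "strict_mono t" and \<mu>_pos: "\<And>n. \<mu> n > 0" and \<mu>_sum: "\<mu> summable_on UNIV"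
    and x: "t n < x" "x < t (n+1)"
  shows "(\<lambda>k. \<mu> k / (x - t k)) summable_on UNIV"
proof -
  define d where "d = min (x - t n) (t (n+1) - x)"
  have d: "d > 0" using x by (simp add: d_def)
  have "(\<lambda>k. \<mu> k * (1/d)) summable_on UNIV" by (rule summable_on_cmult_left[OF \<mu>_sum])
  then have g: "Infinite_Sum.abs_summable_on (\<lambda>k. \<mu> k * (1/d)) UNIV"
    by (rule summable_on_iff_abs_summable_on_real[THEN iffD1])
  have "Infinite_Sum.abs_summable_on (\<lambda>k. \<mu> k / (x - t k)) UNIV"
  proof (rule Infinite_Sum.abs_summable_on_comparison_test[OF g])
    fix k
    have db: "\<bar>x - t k\<bar> \<ge> d" using dist_bound[OF tm x, of k] by (simp add: d_def)
    have mk: "\<mu> k > 0" by (rule \<mu>_pos)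
    have "norm (\<mu> k / (x - t k)) = \<mu> k / \<bar>x - t k\<bar>"
      unfolding real_norm_def abs_divide using mk by simp
    also have "\<dots> \<le> \<mu> k / d"
      by (rule divide_left_mono[OF db]) (use mk d db in auto)
    also have "\<dots> = norm (\<mu> k * (1/d))"
      unfolding real_norm_def using mk d by simp
    finally show "norm (\<mu> k / (x - t k)) \<le> norm (\<mu> k * (1/d))" .
  qed
  then show ?thesis by (rule summable_on_iff_abs_summable_on_real[THEN iffD2])
qed

lemma prod_ge_sum:
  fixes u :: "'a \<Rightarrow> real"
  assumes "finite S" "\<And>n. n \<in> S \<Longrightarrow> u n \<ge> 0"
  shows "1 + sum u S \<le> (\<Prod>n\<in>S. 1 + u n)"
  using assms
proof (induction S rule: finite_induct)
  case (insert x F)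
  have ih: "1 + sum u F \<le> (\<Prod>n\<in>F. 1 + u n)" using insert by auto
  have ux: "u x \<ge> 0" using insert by auto
  have sF: "sum u F \<ge> 0" using insert by (intro sum_nonneg) auto
  have "1 + sum u (insert x F) = 1 + u x + sum u F" using insert by simp
  also have "\<dots> \<le> (1 + u x) * (1 + sum u F)" using ux sF by (simp add: algebra_simps)
  also have "\<dots> \<le> (1 + u x) * (\<Prod>n\<in>F. 1 + u n)" using ih ux by (intro mult_left_mono) auto
  also have "\<dots> = (\<Prod>n\<in>insert x F. 1 + u n)" using insert by simp
  finally show ?case .
qed simp

lemma summable_from_prod:
  fixes u \<rho> :: "'a \<Rightarrow> real"
  assumes P: "\<And>S. finite S \<Longrightarrow> S \<subseteq> X \<Longrightarrow> (\<Prod>n\<in>S. \<rho> n) \<le> K"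
    and u: "\<And>n. n \<in> X \<Longrightarrow> 0 \<le> u n \<and> 1 + u n \<le> \<rho> n"
  shows "u summable_on X"
proof (rule nonneg_bdd_above_summable_on)
  show "\<And>x. x \<in> X \<Longrightarrow> 0 \<le> u x" using u by blast
  show "bdd_above (sum u ` {F. F \<subseteq> X \<and> finite F})"
  proof (rule bdd_aboveI2)
    fix S assume S: "S \<in> {F. F \<subseteq> X \<and> finite F}"
    then have "1 + sum u S \<le> (\<Prod>n\<in>S. 1 + u n)" using u by (intro prod_ge_sum) auto
    also have "\<dots> \<le> (\<Prod>n\<in>S. \<rho> n)" using S u by (intro prod_mono) fastforce
    also have "\<dots> \<le> K" using S P by auto
    finally show "sum u S \<le> K - 1" by simp
  qed
qed

lemma ratio_ge:
  fixes a b :: real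
  assumes "1 \<le> a" "a \<le> b"
  shows "1 + (b - a) / a \<le> (1 + b\<^sup>2) / (1 + a\<^sup>2)"
proof -
  have "1 + (b - a) / a = b / a" using assms by (simp add: field_simps)
  moreover have "b / a \<le> (1 + b\<^sup>2) / (1 + a\<^sup>2)"
  proof -
    have ab1: "1 \<le> a * b" using assms mult_mono[of 1 a 1 b] by simp
    have "1 * (b - a) \<le> (a * b) * (b - a)" by (rule mult_right_mono[OF ab1]) (use assms in simp)
    then have "b - a \<le> a * b * (b - a)" by simp
    then have "b * (1 + a\<^sup>2) \<le> a * (1 + b\<^sup>2)" by (simp add: algebra_simps power2_eq_square)
    then have "b * (1 + a\<^sup>2) \<le> (1 + b\<^sup>2) * a" by (simp add: mult.commute)
    then have "b \<le> ((1 + b\<^sup>2) * a) / (1 + a\<^sup>2)"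
      by (subst pos_le_divide_eq) (auto intro: add_pos_nonneg)
    then have "b \<le> (1 + b\<^sup>2) / (1 + a\<^sup>2) * a" by simp
    then show ?thesis using assms by (subst pos_divide_le_eq) auto
  qed
  ultimately show ?thesis by simp
qed

lemma int_seq_filterlim: "filterlim (\<lambda>N::nat. {-int N..int N}) (finite_subsets_at_top UNIV) sequentially"
proof (subst filterlim_finite_subsets_at_top, safe)
  fix X :: "int set" assume X: "finite X"
  define B where "B = (\<Sum>x\<in>X. \<bar>x\<bar>)"
  have B: "\<forall>x\<in>X. \<bar>x\<bar> \<le> B"
    unfolding B_def using X by (auto intro: member_le_sum)
  show "\<forall>\<^sub>F y in sequentially. finite {- int y..int y} \<and> X \<subseteq> {- int y..int y} \<and> {- int y..int y} \<subseteq> UNIV"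
    unfolding eventually_sequentially
  proof (rule exI[of _ "nat B"], intro allI impI conjI)
    fix N assume N: "nat B \<le> N"
    show "X \<subseteq> {- int N..int N}"
    proof
      fix x assume "x \<in> X"
      then have "\<bar>x\<bar> \<le> int N" using B N by fastforce
      then show "x \<in> {- int N..int N}" by auto
    qed
  qed auto
qed


lemma ratio_factor_ge1:
  fixes t :: "int \<Rightarrow> real"
  assumes tm: "strict_mono t" and r: "t n < r" "r < t (n+1)"
  shows "w r \<le> w (t (if r \<ge> 0 then n+1 else n))"
proof (cases "r \<ge> 0")
  case True then show ?thesis using r by (intro w_mono) auto
next
  case False then show ?thesis using r by (intro w_mono) auto
qed

lemma w_cont: "isCont w x"
  unfolding w_def by (intro continuous_intros)

lemma w_sq: "(w x)\<^sup>2 = 1 + x\<^sup>2"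
  unfolding w_def by (simp add: add_pos_nonneg)

theorem proposition5p3:
  fixes t :: "int \<Rightarrow> real" and \<mu> :: "int \<Rightarrow> real"
    and A B :: "complex \<Rightarrow> complex" and s :: "int \<Rightarrow> real"
  assumes t_mono: "strict_mono t"
    and t_top: "filterlim t at_top at_top"
    and t_bot: "filterlim t at_bot at_bot"
    and \<mu>_pos: "\<And>n. \<mu> n > 0"
    and \<mu>_sum: "\<mu> summable_on UNIV"
    and A_entire: "A holomorphic_on UNIV"
    and A_real: "\<And>x::real. A (complex_of_real x) \<in> \<real>"
    and A_zeros: "{z. A z = 0} = complex_of_real ` range t"
    and A_simple: "\<And>n. deriv A (complex_of_real (t n)) \<noteq> 0"
    and B_entire: "B holomorphic_on UNIV"
    and B_def: "\<And>z. z \<notin> complex_of_real ` range t \<Longrightarrow>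
        B z / A z = (\<Sum>\<^sub>\<infinity>n. complex_of_real (\<mu> n) / (z - complex_of_real (t n)))"
    and s_in: "\<And>n. t n < s n \<and> s n < t (n + 1)"
    and s_zero: "\<And>n. B (complex_of_real (s n)) = 0"
  shows "(\<lambda>n. (t (n + 1) - s n) / s n) summable_on {n. s n > 0} \<and>
         (\<lambda>n. (s n - t n) / \<bar>s n\<bar>) summable_on {n. s n < 0}"
proof -
  define Fr where "Fr x = (\<Sum>\<^sub>\<infinity>k. \<mu> k / (x - t k))" for x
  define Fs where "Fs N x = (\<Sum>k\<in>{-int N..int N}. \<mu> k / (x - t k))" for N :: nat and x
  have s_ne: "s n \<noteq> t k" for n k
    using dist_bound[OF t_mono, of n "s n" k] s_in[of n] by auto
  have Fr_s: "Fr (s n) = 0" for n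
  proof -
    have summ: "(\<lambda>k. \<mu> k / (s n - t k)) summable_on UNIV"
      by (rule term_summable[OF t_mono \<mu>_pos \<mu>_sum]) (use s_in in auto)
    have notin: "complex_of_real (s n) \<notin> complex_of_real ` range t" using s_ne by auto
    have "B (of_real (s n)) / A (of_real (s n)) = (\<Sum>\<^sub>\<infinity>k. complex_of_real (\<mu> k) / (of_real (s n) - of_real (t k)))"
      by (rule B_def[OF notin])
    also have "\<dots> = (\<Sum>\<^sub>\<infinity>k. complex_of_real (\<mu> k / (s n - t k)))" by simp
    also have "\<dots> = of_real (Fr (s n))" unfolding Fr_def
      by (rule infsumI[OF has_sum_of_real[OF has_sum_infsum[OF summ]]])
    finally show ?thesis using s_zero[of n] by simp
  qed
  have Fr_has: "((\<lambda>k. \<mu> k / (x - t k)) has_sum Fr x) UNIV" if "t n < x" "x < t (n+1)" for n x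
    unfolding Fr_def by (rule has_sum_infsum, rule term_summable[OF t_mono \<mu>_pos \<mu>_sum]) (use that in auto)
  have Fr_dec: "Fr y < Fr x" if xy: "t n < x" "x < y" "y < t (n+1)" for n x y
  proof -
    have hx: "((\<lambda>k. \<mu> k / (x - t k)) has_sum Fr x) UNIV" by (rule Fr_has) (use xy in auto)
    have hy: "((\<lambda>k. \<mu> k / (y - t k)) has_sum Fr y) UNIV" by (rule Fr_has) (use xy in auto)
    show ?thesis
      by (rule has_sum_strict_mono[OF hy hx, of n]) (use term_dec[OF t_mono \<mu>_pos xy] in \<open>auto intro: less_imp_le\<close>)
  qed
  have Fs_dec: "Fs N y < Fs N x" if xy: "t n < x" "x < y" "y < t (n+1)" for N n x y
    unfolding Fs_def
    by (rule sum_strict_mono) (use term_dec[OF t_mono \<mu>_pos xy] in auto)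
  have Fs_lim: "(\<lambda>N. Fs N x) \<longlonglongrightarrow> Fr x" if "t n < x" "x < t (n+1)" for n x
  proof -
    have "(sum (\<lambda>k. \<mu> k / (x - t k)) \<longlongrightarrow> Fr x) (finite_subsets_at_top UNIV)"
      using Fr_has[OF that] unfolding has_sum_def .
    from filterlim_compose[OF this int_seq_filterlim] show ?thesis unfolding Fs_def .
  qed
  define r where "r N n = (SOME y. t n < y \<and> y < t (n+1) \<and> Fs N y = 0)" for N n
  have r_prop: "t n < r N n \<and> r N n < t (n+1) \<and> Fs N (r N n) = 0" if "-int N \<le> n" "n < int N" for N n
    unfolding r_def Fs_def
    by (rule someI_ex, rule zero_exists[OF t_mono \<mu>_pos]) (use that in auto)
  have ev_in: "eventually (\<lambda>N. S \<subseteq> {-int N..<int N}) sequentially" if "finite S" for S :: "int set"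
  proof -
    define Bd where "Bd = (\<Sum>x\<in>S. \<bar>x\<bar>)"
    have Bd: "\<forall>x\<in>S. \<bar>x\<bar> \<le> Bd" unfolding Bd_def using that by (auto intro: member_le_sum)
    show ?thesis unfolding eventually_sequentially
    proof (rule exI[of _ "nat Bd + 1"], intro allI impI subsetI)
      fix N x assume N: "nat Bd + 1 \<le> N" and x: "x \<in> S"
      then have "\<bar>x\<bar> < int N" using Bd by fastforce
      then show "x \<in> {-int N..<int N}" by auto
    qed
  qed
  have r_lim: "(\<lambda>N. r N n) \<longlonglongrightarrow> s n" for n
  proof (rule tendstoI)
    fix e :: real assume e: "e > 0"
    define e' where "e' = min e (min (s n - t n) (t (n+1) - s n)) / 2"
    have m: "min e (min (s n - t n) (t (n+1) - s n)) > 0" using e s_in[of n] by auto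
    have mle: "min e (min (s n - t n) (t (n+1) - s n)) \<le> e"
              "min e (min (s n - t n) (t (n+1) - s n)) \<le> s n - t n"
              "min e (min (s n - t n) (t (n+1) - s n)) \<le> t (n+1) - s n" by auto
    have e': "0 < e'" "e' < e" "t n < s n - e'" "s n + e' < t (n+1)"
      using m mle unfolding e'_def by linarith+
    have p1: "Fr (s n - e') > 0" using Fr_dec[of n "s n - e'" "s n"] e' s_in[of n] Fr_s[of n] by auto
    have p2: "Fr (s n + e') < 0" using Fr_dec[of n "s n" "s n + e'"] e' s_in[of n] Fr_s[of n] by auto
    have ev1: "eventually (\<lambda>N. Fs N (s n - e') > 0) sequentially"
      by (rule order_tendstoD(1)[OF Fs_lim p1]) (use e' s_in[of n] in auto)
    have ev2: "eventually (\<lambda>N. Fs N (s n + e') < 0) sequentially"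
      by (rule order_tendstoD(2)[OF Fs_lim p2]) (use e' s_in[of n] in auto)
    have ev3: "eventually (\<lambda>N. {n} \<subseteq> {-int N..<int N}) sequentially" by (rule ev_in) simp
    show "eventually (\<lambda>N. dist (r N n) (s n) < e) sequentially"
      using ev1 ev2 ev3
    proof eventually_elim
      case (elim N)
      have rp: "t n < r N n" "r N n < t (n+1)" "Fs N (r N n) = 0" using r_prop[of N n] elim(3) by auto
      have lo: "s n - e' < r N n"
      proof (rule ccontr)
        assume "\<not> s n - e' < r N n"
        then consider "r N n = s n - e'" | "r N n < s n - e'" by linarith
        then show False
        proof cases
          case 1 then show False using rp elim(1) by simp
        next
          case 2 then have "Fs N (s n - e') < Fs N (r N n)"
            using Fs_dec[of n "r N n" "s n - e'" N] rp e' by auto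
          then show False using rp elim(1) by simp
        qed
      qed
      have hi: "r N n < s n + e'"
      proof (rule ccontr)
        assume "\<not> r N n < s n + e'"
        then consider "r N n = s n + e'" | "s n + e' < r N n" by linarith
        then show False
        proof cases
          case 1 then show False using rp elim(2) by simp
        next
          case 2 then have "Fs N (r N n) < Fs N (s n + e')"
            using Fs_dec[of n "s n + e'" "r N n" N] rp e' by auto
          then show False using rp elim(2) by simp
        qed
      qed
      show ?case using lo hi e' by (simp add: dist_real_def abs_less_iff)
    qed
  qed
  define c where "c = \<mu> 0 / (1 + (t 0)\<^sup>2)"
  have c_pos: "c > 0" using \<mu>_pos[of 0] by (simp add: c_def add_pos_nonneg)
  define K where "K = (\<Sum>\<^sub>\<infinity>k. \<mu> k) / c"
  have claim: "(\<Prod>m\<in>S. w (t (if s m \<ge> 0 then m+1 else m)) / w (s m)) \<le> K"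
    if S: "finite S" "\<forall>m\<in>S. s m \<noteq> 0" for S
  proof -
    define q where "q m = (if s m \<ge> 0 then m+1 else m)" for m
    have wpos: "w x \<noteq> 0" for x using w_ge1[of x] by simp
    have lim: "(\<lambda>N. \<Prod>m\<in>S. w (t (q m)) / w (r N m)) \<longlonglongrightarrow> (\<Prod>m\<in>S. w (t (q m)) / w (s m))"
      by (intro tendsto_prod tendsto_divide tendsto_const isCont_tendsto_compose[OF w_cont r_lim] wpos)
    have ev1: "eventually (\<lambda>N. \<forall>m\<in>S. (r N m \<ge> 0 \<longleftrightarrow> s m \<ge> 0)) sequentially"
    proof (rule eventually_ball_finite[OF S(1)], intro ballI)
      fix m assume m: "m \<in> S"
      show "eventually (\<lambda>N. (r N m \<ge> 0 \<longleftrightarrow> s m \<ge> 0)) sequentially"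
      proof (cases "s m > 0")
        case True
        show ?thesis using order_tendstoD(1)[OF r_lim True] by eventually_elim (use True in auto)
      next
        case False
        then have "s m < 0" using S(2) m by force
        show ?thesis using order_tendstoD(2)[OF r_lim \<open>s m < 0\<close>] by eventually_elim (use \<open>s m < 0\<close> in auto)
      qed
    qed
    have ev: "eventually (\<lambda>N. (\<Prod>m\<in>S. w (t (q m)) / w (r N m)) \<le> K) sequentially"
      using ev1 ev_in[OF S(1)]
    proof eventually_elim
      case (elim N)
      define p where "p m = (if r N m \<ge> 0 then m+1 else m)" for m
      have rin: "t m < r N m \<and> r N m < t (m+1)" if "m \<in> {-int N..<int N}" for m
        using r_prop[of N m] that by auto
      have rz: "(\<Sum>k\<in>{-int N..int N}. \<mu> k / (r N m - t k)) = 0" if "m \<in> {-int N..<int N}" for m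
        using r_prop[of N m] that by (auto simp: Fs_def)
      have kb: "(\<Prod>m\<in>{-int N..<int N}. w (t (p m)) / w (r N m)) \<le> (\<Sum>k\<in>{-int N..int N}. \<mu> k) / (\<mu> 0 / (1 + (t 0)\<^sup>2))"
        unfolding p_def by (rule key_bound[OF t_mono \<mu>_pos]) (use rin rz in auto)
      have ge1: "1 \<le> w (t (p m)) / w (r N m)" if "m \<in> {-int N..<int N}" for m
        using ratio_factor_ge1[OF t_mono, of m "r N m"] rin[OF that] w_ge1[of "r N m"] by (simp add: p_def)
      have "(\<Prod>m\<in>S. w (t (q m)) / w (r N m)) = (\<Prod>m\<in>S. w (t (p m)) / w (r N m))"
        using elim(1) by (intro prod.cong) (auto simp: q_def p_def)
      also have "\<dots> \<le> (\<Prod>m\<in>{-int N..<int N}. w (t (p m)) / w (r N m))"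
      proof (rule prod_mono2)
        fix m assume "m \<in> S"
        then show "0 \<le> w (t (p m)) / w (r N m)"
          using w_ge1[of "t (p m)"] w_ge1[of "r N m"] by (intro divide_nonneg_nonneg) auto
      qed (use elim(2) ge1 in auto)
      also have "\<dots> \<le> (\<Sum>k\<in>{-int N..int N}. \<mu> k) / c" using kb by (simp add: c_def)
      also have "\<dots> \<le> K" unfolding K_def
        by (rule divide_right_mono[OF finite_sum_le_infsum[OF \<mu>_sum]]) (use c_pos \<mu>_pos in \<open>auto intro: less_imp_le\<close>)
      finally show ?case .
    qed
    have "(\<Prod>m\<in>S. w (t (q m)) / w (s m)) \<le> K"
      by (rule tendsto_le[OF trivial_limit_sequentially tendsto_const lim ev])
    then show ?thesis by (simp add: q_def)
  qed
  obtain N1 where N1: "\<forall>n\<ge>N1. 1 \<le> t n"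
    using t_top unfolding filterlim_at_top eventually_at_top_linorder by blast
  obtain N0 where N0: "\<forall>n\<le>N0. t n \<le> -1"
    using t_bot unfolding filterlim_at_bot eventually_at_bot_linorder by blast
  have fin_small: "finite {n. -1 < s n \<and> s n < 1}"
  proof (rule finite_subset[of _ "{N0..N1}"])
    show "{n. -1 < s n \<and> s n < 1} \<subseteq> {N0..N1}"
    proof
      fix n assume n: "n \<in> {n. -1 < s n \<and> s n < 1}"
      have "N0 \<le> n"
      proof (rule ccontr)
        assume "\<not> N0 \<le> n" then have "n + 1 \<le> N0" by simp
        then show False using N0 n s_in[of n] by force
      qed
      moreover have "n \<le> N1"
      proof (rule ccontr)
        assume "\<not> n \<le> N1" then have "N1 \<le> n" by simp
        then show False using N1 n s_in[of n] by force
      qed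
      ultimately show "n \<in> {N0..N1}" by simp
    qed
  qed simp
  have pos: "(\<lambda>n. (t (n + 1) - s n) / s n) summable_on {n. s n > 0}"
  proof -
    have f1: "finite {n. 0 < s n \<and> s n < 1}" by (rule finite_subset[OF _ fin_small]) auto
    have X2: "(\<lambda>n. (t (n + 1) - s n) / s n) summable_on {n. s n \<ge> 1}"
    proof (rule summable_from_prod[where \<rho> = "\<lambda>n. (w (t (n+1)) / w (s n))\<^sup>2" and K = "K\<^sup>2"])
      fix S assume S: "finite S" "S \<subseteq> {n. s n \<ge> 1}"
      have "(\<Prod>m\<in>S. w (t (if s m \<ge> 0 then m+1 else m)) / w (s m)) \<le> K"
        by (rule claim) (use S in auto)
      moreover have "(\<Prod>m\<in>S. w (t (if s m \<ge> 0 then m+1 else m)) / w (s m)) = (\<Prod>m\<in>S. w (t (m+1)) / w (s m))"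
        by (rule prod.cong) (use S in auto)
      moreover have "0 \<le> (\<Prod>m\<in>S. w (t (m+1)) / w (s m))"
        by (rule prod_nonneg) (use w_ge1 in \<open>auto intro: divide_nonneg_nonneg order_trans[OF zero_le_one]\<close>)
      ultimately have "(\<Prod>m\<in>S. w (t (m+1)) / w (s m))\<^sup>2 \<le> K\<^sup>2" by (intro power_mono) auto
      then show "(\<Prod>n\<in>S. (w (t (n+1)) / w (s n))\<^sup>2) \<le> K\<^sup>2" by (simp add: prod_power_distrib)
    next
      fix n assume n: "n \<in> {n. s n \<ge> 1}"
      have le: "s n \<le> t (n+1)" using s_in[of n] by simp
      have "1 + (t (n+1) - s n) / s n \<le> (1 + (t (n+1))\<^sup>2) / (1 + (s n)\<^sup>2)"
        by (rule ratio_ge) (use n le in auto)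
      moreover have "(w (t (n+1)) / w (s n))\<^sup>2 = (1 + (t (n+1))\<^sup>2) / (1 + (s n)\<^sup>2)"
        by (simp add: power_divide w_sq)
      moreover have "0 \<le> (t (n+1) - s n) / s n" using n le by simp
      ultimately show "0 \<le> (t (n+1) - s n) / s n \<and> 1 + (t (n+1) - s n) / s n \<le> (w (t (n+1)) / w (s n))\<^sup>2"
        by simp
    qed
    have "{n. s n > 0} = {n. 0 < s n \<and> s n < 1} \<union> {n. s n \<ge> 1}" by auto
    moreover have "(\<lambda>n. (t (n + 1) - s n) / s n) summable_on ({n. 0 < s n \<and> s n < 1} \<union> {n. s n \<ge> 1})"
      by (rule summable_on_Un_disjoint[OF summable_on_finite[OF f1] X2]) auto
    ultimately show ?thesis by simp
  qed
  have neg: "(\<lambda>n. (s n - t n) / \<bar>s n\<bar>) summable_on {n. s n < 0}"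
  proof -
    have f1: "finite {n. -1 < s n \<and> s n < 0}" by (rule finite_subset[OF _ fin_small]) auto
    have X2: "(\<lambda>n. (s n - t n) / \<bar>s n\<bar>) summable_on {n. s n \<le> -1}"
    proof (rule summable_from_prod[where \<rho> = "\<lambda>n. (w (t n) / w (s n))\<^sup>2" and K = "K\<^sup>2"])
      fix S assume S: "finite S" "S \<subseteq> {n. s n \<le> -1}"
      have "(\<Prod>m\<in>S. w (t (if s m \<ge> 0 then m+1 else m)) / w (s m)) \<le> K"
        by (rule claim) (use S in auto)
      moreover have "(\<Prod>m\<in>S. w (t (if s m \<ge> 0 then m+1 else m)) / w (s m)) = (\<Prod>m\<in>S. w (t m) / w (s m))"
        by (rule prod.cong) (use S in auto)
      moreover have "0 \<le> (\<Prod>m\<in>S. w (t m) / w (s m))"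
        by (rule prod_nonneg) (use w_ge1 in \<open>auto intro: divide_nonneg_nonneg order_trans[OF zero_le_one]\<close>)
      ultimately have "(\<Prod>m\<in>S. w (t m) / w (s m))\<^sup>2 \<le> K\<^sup>2" by (intro power_mono) auto
      then show "(\<Prod>n\<in>S. (w (t n) / w (s n))\<^sup>2) \<le> K\<^sup>2" by (simp add: prod_power_distrib)
    next
      fix n assume n: "n \<in> {n. s n \<le> -1}"
      have le: "t n \<le> s n" using s_in[of n] by simp
      have "1 + (- t n - - s n) / - s n \<le> (1 + (- t n)\<^sup>2) / (1 + (- s n)\<^sup>2)"
        by (rule ratio_ge) (use n le in auto)
      moreover have "(- t n - - s n) / - s n = (s n - t n) / \<bar>s n\<bar>" using n by simp
      moreover have "(w (t n) / w (s n))\<^sup>2 = (1 + (t n)\<^sup>2) / (1 + (s n)\<^sup>2)"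
        by (simp add: power_divide w_sq)
      moreover have "0 \<le> (s n - t n) / \<bar>s n\<bar>" using le by simp
      ultimately show "0 \<le> (s n - t n) / \<bar>s n\<bar> \<and> 1 + (s n - t n) / \<bar>s n\<bar> \<le> (w (t n) / w (s n))\<^sup>2"
        by simp
    qed
    have "{n. s n < 0} = {n. -1 < s n \<and> s n < 0} \<union> {n. s n \<le> -1}" by auto
    moreover have "(\<lambda>n. (s n - t n) / \<bar>s n\<bar>) summable_on ({n. -1 < s n \<and> s n < 0} \<union> {n. s n \<le> -1})"
      by (rule summable_on_Un_disjoint[OF summable_on_finite[OF f1] X2]) auto
    ultimately show ?thesis by simp
  qed
  show ?thesis using pos neg by blast
qed

end
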